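(* Let $E$ be a real affine space of dimension $n$, let $\mu\in\mathcal M(E)$ and let $K$ be a convex subset of $E$ satisfying $\mu(E\setminus K)<2^{-n}\mu(E)$. Then every Yao-Yao center of $\mu$ belongs to $K$.
   Context: $\vec E$ denotes the vector space associated with $E$. A partition of $E$ is a collection $\mathcal P$ of subsets of $E$ with $\bigcup\mathcal P=E$ such that the interiors of any two distinct elements of $\mathcal P$ are disjoint. Yao-Yao partitions and their centers are defined by induction on the dimension: if $E=\{x\}$ has dimension $0$, the Yao-Yao partition of $E$ is $\{\{x\}\}$, with center $x$. If $\dim E=n\ge 1$, $\mathcal P$ is a Yao-Yao partition of $E$ with center $x$ if there exist an affine hyperplane $F$ of $E$, a vector $v\in\vec E\setminus\vec F$ and two Yao-Yao partitions $\mathcal P_1,\mathcal P_{-1}$ of $F$ having the same center $x$, such that $\mathcal P=\{A+\mathbb R_- v : A\in\mathcal P_{-1}\}\cup\{A+\mathbb R_+ v: A\in\mathcal P_1\}$. $\mathcal M(E)$ is the set of finite non-negative Borel measures $\mu$ on $E$ such that $\mu(H)=0$ for every affine hyperplane $H$ of $E$. For $\mu\in\mathcal M(E)$, a Yao-Yao equipartition for $\mu$ is a Yao-Yao partition $\mathcal P$ of $E$ with $\mu(A)=2^{-n}\mu(E)$ for all $A\in\mathcal P$; a point $x\in E$ is a Yao-Yao center of $\mu$ if it is the center of some Yao-Yao equipartition for $\mu$. *)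

theory Defs
  imports "HOL-Analysis.Analysis"
begin

text \<open>A real affine space of dimension n is modelled as a nonempty affine subset E of a
Euclidean space with aff_dim E = n.  Its associated vector space is the set of differences.\<close>

definition vec_space :: "'a::euclidean_space set \<Rightarrow> 'a set" where
  "vec_space E = {a - b | a b. a \<in> E \<and> b \<in> E}"

definition affine_hyperplane_of :: "'a::euclidean_space set \<Rightarrow> 'a set \<Rightarrow> bool" where
  "affine_hyperplane_of E H \<longleftrightarrow>
     affine H \<and> H \<noteq> {} \<and> H \<subseteq> E \<and> aff_dim H = aff_dim E - 1"

definition half_cone :: "'a::euclidean_space set \<Rightarrow> real set \<Rightarrow> 'a \<Rightarrow> 'a set" where
  "half_cone A T v = {a + t *\<^sub>R v | a t. a \<in> A \<and> t \<in> T}"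

inductive yao_yao :: "'a::euclidean_space set \<Rightarrow> 'a set set \<Rightarrow> 'a \<Rightarrow> bool" where
  dim0: "yao_yao {x} {{x}} x"
| step: "\<lbrakk> affine E; aff_dim E \<ge> 1; affine_hyperplane_of E F;
           v \<in> vec_space E; v \<notin> vec_space F;
           yao_yao F P1 x; yao_yao F Pm1 x \<rbrakk>
         \<Longrightarrow> yao_yao E ((\<lambda>A. half_cone A {..0} v) ` Pm1 \<union> (\<lambda>A. half_cone A {0..} v) ` P1) x"

definition in_M :: "'a::euclidean_space set \<Rightarrow> 'a measure \<Rightarrow> bool" where
  "in_M E \<mu> \<longleftrightarrow> sets \<mu> = sets (restrict_space borel E) \<and> finite_measure \<mu> \<and>
     (\<forall>H. affine_hyperplane_of E H \<longrightarrow> emeasure \<mu> H = 0)"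

definition yao_yao_equipartition :: "'a::euclidean_space set \<Rightarrow> 'a measure \<Rightarrow> 'a set set \<Rightarrow> 'a \<Rightarrow> bool" where
  "yao_yao_equipartition E \<mu> P x \<longleftrightarrow> yao_yao E P x \<and>
     (\<forall>A\<in>P. A \<in> sets \<mu> \<and> measure \<mu> A = measure \<mu> E / 2 ^ nat (aff_dim E))"

definition yao_yao_center :: "'a::euclidean_space set \<Rightarrow> 'a measure \<Rightarrow> 'a \<Rightarrow> bool" where
  "yao_yao_center E \<mu> x \<longleftrightarrow> (\<exists>P. yao_yao_equipartition E \<mu> P x)"

end

theory Submission
  imports Defs
begin

lemma yy_cells:
  assumes "yao_yao E P x"
  shows "x \<in> E \<and> (\<forall>A\<in>P. A \<subseteq> E) \<and> (\<forall>w. \<exists>A\<in>P. \<forall>z\<in>A. w \<bullet> z \<le> w \<bullet> x)"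
  using assms
proof (induction rule: yao_yao.induct)
  case (dim0 x)
  then show ?case by auto
next
  case (step E F v P1 x Pm1)
  have FE: "F \<subseteq> E" using step.hyps(3) by (simp add: affine_hyperplane_of_def)
  obtain b c where bc: "b \<in> E" "c \<in> E" "v = b - c" using step.hyps(4) by (auto simp: vec_space_def)
  have sub: "half_cone A T v \<subseteq> E" if "A \<subseteq> F" for A T
  proof
    fix z assume "z \<in> half_cone A T v"
    then obtain a t where "a \<in> A" "z = a + t *\<^sub>R v" by (auto simp: half_cone_def)
    then show "z \<in> E" using mem_affine_3_minus[OF step.hyps(1), of a b c t] bc that FE by auto
  qed
  have key: "\<exists>A\<in>((\<lambda>A. half_cone A {..0} v) ` Pm1 \<union> (\<lambda>A. half_cone A {0..} v) ` P1).
      \<forall>z\<in>A. w \<bullet> z \<le> w \<bullet> x" for w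
  proof (cases "w \<bullet> v \<ge> 0")
    case True
    obtain A where A: "A \<in> Pm1" "\<forall>z\<in>A. w \<bullet> z \<le> w \<bullet> x" using step.IH(2) by blast
    have "\<forall>z\<in>half_cone A {..0} v. w \<bullet> z \<le> w \<bullet> x"
    proof
      fix z assume "z \<in> half_cone A {..0} v"
      then obtain a t where "a \<in> A" "t \<le> 0" "z = a + t *\<^sub>R v" by (auto simp: half_cone_def)
      moreover have "t * (w \<bullet> v) \<le> 0" using True \<open>t \<le> 0\<close> by (simp add: mult_nonpos_nonneg)
      ultimately show "w \<bullet> z \<le> w \<bullet> x" using A by (auto simp: inner_add_right)
    qed
    then show ?thesis using A by blast
  next
    case False
    obtain A where A: "A \<in> P1" "\<forall>z\<in>A. w \<bullet> z \<le> w \<bullet> x" using step.IH(1) by blast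
    have "\<forall>z\<in>half_cone A {0..} v. w \<bullet> z \<le> w \<bullet> x"
    proof
      fix z assume "z \<in> half_cone A {0..} v"
      then obtain a t where "a \<in> A" "t \<ge> 0" "z = a + t *\<^sub>R v" by (auto simp: half_cone_def)
      moreover have "t * (w \<bullet> v) \<le> 0" using False \<open>t \<ge> 0\<close> by (simp add: mult_nonneg_nonpos)
      ultimately show "w \<bullet> z \<le> w \<bullet> x" using A by (auto simp: inner_add_right)
    qed
    then show ?thesis using A by blast
  qed
  have xF: "x \<in> F" and P1F: "\<forall>A\<in>P1. A \<subseteq> F" and Pm1F: "\<forall>A\<in>Pm1. A \<subseteq> F"
    using step.IH by simp_all
  have cells: "\<forall>A\<in>((\<lambda>A. half_cone A {..0} v) ` Pm1 \<union> (\<lambda>A. half_cone A {0..} v) ` P1). A \<subseteq> E"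
  proof
    fix A assume "A \<in> ((\<lambda>A. half_cone A {..0} v) ` Pm1 \<union> (\<lambda>A. half_cone A {0..} v) ` P1)"
    then obtain A0 T where "A = half_cone A0 T v" "A0 \<subseteq> F" using P1F Pm1F by blast
    then show "A \<subseteq> E" using sub by simp
  qed
  have "x \<in> E" using xF FE by (rule subsetD[rotated])
  then show ?case using cells key by (intro conjI allI) assumption+
qed

theorem proposition5:
  fixes E K :: "'a::euclidean_space set" and \<mu> :: "'a measure" and n :: nat and x :: 'a
  assumes "affine E" and "E \<noteq> {}" and "aff_dim E = int n"
    and "in_M E \<mu>"
    and "convex K" and "K \<subseteq> E"
    and "\<exists>B\<in>sets \<mu>. E - K \<subseteq> B \<and> measure \<mu> B < measure \<mu> E / 2 ^ n"
    and "yao_yao_center E \<mu> x"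
  shows "x \<in> K"
proof (rule ccontr)
  assume xK: "x \<notin> K"
  obtain B where B: "B \<in> sets \<mu>" "E - K \<subseteq> B" "measure \<mu> B < measure \<mu> E / 2 ^ n"
    using assms(7) by blast
  obtain P where P: "yao_yao_equipartition E \<mu> P x" using assms(8) by (auto simp: yao_yao_center_def)
  have yy: "yao_yao E P x" and cellm: "\<forall>A\<in>P. A \<in> sets \<mu> \<and> measure \<mu> A = measure \<mu> E / 2 ^ n"
    using P assms(3) by (auto simp: yao_yao_equipartition_def)
  from yy_cells[OF yy] have xE: "x \<in> E" and cellE: "\<forall>A\<in>P. A \<subseteq> E"
    and keyl: "\<And>w. \<exists>A\<in>P. \<forall>z\<in>A. w \<bullet> z \<le> w \<bullet> x" by auto
  have setsmu: "sets \<mu> = sets (restrict_space borel E)" and fm: "finite_measure \<mu>"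
    and hyp0: "\<And>H. affine_hyperplane_of E H \<Longrightarrow> emeasure \<mu> H = 0"
    using assms(4) by (auto simp: in_M_def)
  interpret finite_measure \<mu> by (rule fm)
  have Esets: "E \<in> sets \<mu>" unfolding setsmu sets_restrict_space by force
  show False
  proof (cases "K = {}")
    case True
    then have "measure \<mu> E \<le> measure \<mu> B" using B Esets by (auto intro: finite_measure_mono)
    moreover have "measure \<mu> E / 2 ^ n \<le> measure \<mu> E"
      by (simp add: divide_le_eq_1 mult_le_cancel_left1 pos_divide_le_eq)
    ultimately show False using B by linarith
  next
    case False
    then obtain k0 where k0: "k0 \<in> K" by blast
    define T where "T = {q::'a. \<forall>s\<in>E. \<forall>s'\<in>E. q \<bullet> (s - s') = 0}"
    have "subspace T" unfolding T_def subspace_def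
      by (auto simp: inner_add_left)
    then have cT: "convex T" by (rule subspace_imp_convex)
    define C where "C = (+) (-x) ` (\<Union>k\<in>K. \<Union>q\<in>T. {k + q})"
    have cC: "convex C" unfolding C_def
      by (intro convex_translation convex_sums assms(5) cT)
    have "0 \<notin> C"
    proof
      assume "0 \<in> C"
      then obtain k q where kq: "k \<in> K" "q \<in> T" "-x + (k + q) = 0" by (auto simp: C_def)
      then have "q = x - k" by (simp add: algebra_simps)
      moreover have "k \<in> E" using kq assms(6) by auto
      ultimately have "q \<bullet> q = 0" using kq(2) xE by (auto simp: T_def)
      then have "q = 0" by simp
      then show False using kq xK \<open>q = x - k\<close> by simp
    qed
    then obtain a where a: "a \<noteq> 0" "\<forall>c\<in>C. 0 \<le> a \<bullet> c"
      using separating_hyperplane_set_0[OF cC] by blast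
    have aK: "a \<bullet> k \<ge> a \<bullet> x" if "k \<in> K" for k
    proof -
      have "0 \<in> T" by (simp add: T_def)
      then have "-x + (k + 0) \<in> C" using that unfolding C_def by blast
      then have "0 \<le> a \<bullet> (-x + (k + 0))" using a(2) by blast
      then show ?thesis by (simp add: inner_add_right inner_diff_right)
    qed
    have "a \<notin> T"
    proof
      assume "a \<in> T"
      then have "-a \<in> T" by (simp add: T_def inner_minus_left)
      then have "-x + (k0 + -a) \<in> C" using k0 unfolding C_def by blast
      then have "0 \<le> a \<bullet> (-x + (k0 + -a))" using a(2) by blast
      moreover have "a \<bullet> (k0 - x) = 0" using \<open>a \<in> T\<close> k0 assms(6) xE by (auto simp: T_def)
      ultimately have "a \<bullet> a \<le> 0" by (simp add: inner_add_right inner_diff_right algebra_simps)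
      then show False using a(1) inner_gt_zero_iff[of a] by linarith
    qed
    then obtain s s' where ss: "s \<in> E" "s' \<in> E" "a \<bullet> (s - s') \<noteq> 0" by (auto simp: T_def)
    have notsub: "\<not> E \<subseteq> {v. a \<bullet> v = a \<bullet> x}"
    proof
      assume "E \<subseteq> {v. a \<bullet> v = a \<bullet> x}"
      then have "a \<bullet> s = a \<bullet> x" "a \<bullet> s' = a \<bullet> x" using ss by auto
      then show False using ss(3) by (simp add: inner_diff_right)
    qed
    define Z where "Z = E \<inter> {v. a \<bullet> v = a \<bullet> x}"
    have "aff_dim Z = aff_dim E - 1"
      using aff_dim_affine_Int_hyperplane[OF assms(1), of a "a \<bullet> x"] notsub xE
      by (auto simp: Z_def)
    moreover have "affine Z" unfolding Z_def by (intro affine_Int assms(1) affine_hyperplane)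
    moreover have "Z \<noteq> {}" using xE by (auto simp: Z_def)
    ultimately have "affine_hyperplane_of E Z" by (auto simp: affine_hyperplane_of_def Z_def)
    then have "emeasure \<mu> Z = 0" by (rule hyp0)
    then have Z0: "measure \<mu> Z = 0" by (simp add: measure_def)
    have "closed {v. a \<bullet> v = a \<bullet> x}" by (rule closed_hyperplane)
    then have "{v. a \<bullet> v = a \<bullet> x} \<in> sets borel" by simp
    then have Zsets: "Z \<in> sets \<mu>" unfolding setsmu sets_restrict_space Z_def by blast
    obtain A where A: "A \<in> P" "\<forall>z\<in>A. a \<bullet> z \<le> a \<bullet> x" using keyl by blast
    have "A \<subseteq> B \<union> Z"
    proof
      fix z assume z: "z \<in> A"
      then have "z \<in> E" using cellE A by auto
      show "z \<in> B \<union> Z"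
      proof (cases "z \<in> K")
        case True
        then show ?thesis using aK[OF True] A z \<open>z \<in> E\<close> by (force simp: Z_def)
      next
        case False
        then show ?thesis using B \<open>z \<in> E\<close> by auto
      qed
    qed
    then have "measure \<mu> A \<le> measure \<mu> (B \<union> Z)"
      using B Zsets by (intro finite_measure_mono) auto
    also have "\<dots> \<le> measure \<mu> B + measure \<mu> Z"
      using B Zsets by (intro measure_subadditive) auto
    finally have "measure \<mu> A \<le> measure \<mu> B" using Z0 by simp
    then show False using cellm A B by auto
  qed
qed

end
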